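(* Let $M$ be as in the context and let $\Gamma_1,\Gamma_2$ be piecewise $C^1$ cuts. If $\Gamma_1$ is homologous to $\Gamma_2$, then $\Gamma_{1,\mathrm{odd}}=\Gamma_{2,\mathrm{odd}}$.
   Context: $M$ is a compact oriented Riemannian surface with piecewise $C^1$ (possibly empty) boundary $\partial M$. A $C^1$ curve is regular if its velocity never vanishes. A closed set $\Gamma\subset M$ is a piecewise $C^1$ cut if it is the image of a finite set of regular $C^1$ curves that intersect one another (and $\partial M$) transversely, and only do so at their endpoints. Such a cut is represented by the singular chain $\sum_a\gamma_a\in C_1(M;\mathbb Z_2)$ of its curves; cuts $\Gamma_1,\Gamma_2$ are homologous if represented by chains $\gamma_1,\gamma_2$ with $[\gamma_1-\gamma_2]=0\in H_1(M,\partial M;\mathbb Z_2)$. For a piecewise $C^1$ cut $\Gamma$, $\Gamma_{\mathrm{odd}}$ denotes the set of points in the interior of $M$ at which an odd number of the curves composing $\Gamma$ terminate. *)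

theory Defs
  imports "HOL-Analysis.Analysis" "HOL-Homology.Homology"
begin

text \<open>Local models in the plane: the whole plane (interior points), a closed
half plane (smooth boundary points), and closed wedges of angle pi/2 and 3 pi/2
(convex resp. reflex corners of the piecewise C1 boundary; by a linear change of
coordinates every non-degenerate corner angle reduces to one of these).\<close>

definition half_plane :: "(real^2) set" where
  "half_plane = {x. 0 \<le> x$2}"

definition quadrant :: "(real^2) set" where
  "quadrant = {x. 0 \<le> x$1 \<and> 0 \<le> x$2}"

definition three_quarter_plane :: "(real^2) set" where
  "three_quarter_plane = {x. 0 \<le> x$1 \<or> 0 \<le> x$2}"

definition surface_models :: "(real^2) set set" where
  "surface_models = {UNIV, half_plane, quadrant, three_quarter_plane}"

definition surface_chart ::
  "'a::euclidean_space set \<Rightarrow> (real^2) set \<Rightarrow> (real^2) set \<Rightarrow> (real^2 \<Rightarrow> 'a)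
     \<Rightarrow> (real^2 \<Rightarrow> ((real^2) \<Rightarrow>\<^sub>L 'a)) \<Rightarrow> bool" where
  "surface_chart M K W \<psi> D \<longleftrightarrow>
     K \<in> surface_models \<and> open W \<and>
     (\<forall>x\<in>W. (\<psi> has_derivative blinfun_apply (D x)) (at x) \<and> inj (blinfun_apply (D x))) \<and>
     continuous_on W D \<and>
     (\<exists>U g. open U \<and> homeomorphism (W \<inter> K) (M \<inter> U) \<psi> g)"

definition surface_boundary :: "'a::euclidean_space set \<Rightarrow> 'a set" where
  "surface_boundary M =
     {p. \<exists>K W \<psi> D x. surface_chart M K W \<psi> D \<and> x \<in> W \<inter> frontier K \<and> \<psi> x = p}"

definition oriented_atlas ::
  "'a::euclidean_space set \<Rightarrow>
    ((real^2) set \<times> (real^2) set \<times> (real^2 \<Rightarrow> 'a) \<times> (real^2 \<Rightarrow> ((real^2) \<Rightarrow>\<^sub>L 'a))) set \<Rightarrow> bool" where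
  "oriented_atlas M \<A> \<longleftrightarrow>
     (\<forall>(K, W, \<psi>, D)\<in>\<A>. surface_chart M K W \<psi> D) \<and>
     (\<forall>p\<in>M. \<exists>(K, W, \<psi>, D)\<in>\<A>. \<exists>x\<in>W \<inter> K. \<psi> x = p) \<and>
     (\<forall>(K1, W1, \<psi>1, D1)\<in>\<A>. \<forall>(K2, W2, \<psi>2, D2)\<in>\<A>.
        \<forall>x1\<in>W1 \<inter> K1. \<forall>x2\<in>W2 \<inter> K2. \<psi>1 x1 = \<psi>2 x2 \<longrightarrow>
          (\<exists>L::real^2^2. 0 < det L \<and>
             blinfun_apply (D1 x1) = blinfun_apply (D2 x2) \<circ> (\<lambda>v. L *v v)))"

definition compact_oriented_pw_C1_surface :: "'a::euclidean_space set \<Rightarrow> bool" where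
  "compact_oriented_pw_C1_surface M \<longleftrightarrow> compact M \<and> (\<exists>\<A>. oriented_atlas M \<A>)"

definition regular_C1_curve :: "(real \<Rightarrow> 'a::euclidean_space) \<Rightarrow> bool" where
  "regular_C1_curve \<gamma> \<longleftrightarrow>
     (\<exists>\<gamma>'. continuous_on {0..1} \<gamma>' \<and>
        (\<forall>t\<in>{0..1}. (\<gamma> has_vector_derivative \<gamma>' t) (at t within {0..1}) \<and> \<gamma>' t \<noteq> 0))"

definition velocity :: "(real \<Rightarrow> 'a::euclidean_space) \<Rightarrow> real \<Rightarrow> 'a" where
  "velocity \<gamma> t = vector_derivative \<gamma> (at t within {0..1})"

definition tangent_dirs :: "'a::euclidean_space set \<Rightarrow> 'a \<Rightarrow> 'a set" where
  "tangent_dirs S p = {v. \<exists>\<beta> \<epsilon>. 0 < \<epsilon> \<and> \<beta> ` {0..\<epsilon>} \<subseteq> S \<and> \<beta> 0 = p \<and>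
                          (\<beta> has_vector_derivative v) (at 0 within {0..\<epsilon>})}"

definition pw_C1_cut :: "'a::euclidean_space set \<Rightarrow> 'i set \<Rightarrow> ('i \<Rightarrow> real \<Rightarrow> 'a) \<Rightarrow> bool" where
  "pw_C1_cut M A \<gamma> \<longleftrightarrow>
     finite A \<and>
     (\<forall>a\<in>A. regular_C1_curve (\<gamma> a) \<and> \<gamma> a ` {0..1} \<subseteq> M) \<and>
     \<comment> \<open>intersections (also self-intersections) only at endpoints\<close>
     (\<forall>a\<in>A. \<forall>b\<in>A. \<forall>s\<in>{0..1}. \<forall>t\<in>{0..1}.
        \<gamma> a s = \<gamma> b t \<and> (a \<noteq> b \<or> s \<noteq> t) \<longrightarrow> s \<in> {0, 1} \<and> t \<in> {0, 1}) \<and>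
     \<comment> \<open>distinct curves meet transversely\<close>
     (\<forall>a\<in>A. \<forall>b\<in>A. \<forall>s\<in>{0, 1}. \<forall>t\<in>{0, 1}.
        a \<noteq> b \<and> \<gamma> a s = \<gamma> b t \<longrightarrow> \<not> (\<exists>c. velocity (\<gamma> a) s = c *\<^sub>R velocity (\<gamma> b) t)) \<and>
     \<comment> \<open>curves meet the boundary only at endpoints, transversely\<close>
     (\<forall>a\<in>A. \<forall>t\<in>{0..1}. \<gamma> a t \<in> surface_boundary M \<longrightarrow>
        t \<in> {0, 1} \<and>
        velocity (\<gamma> a) t \<notin> {c *\<^sub>R w | c w. w \<in> tangent_dirs (surface_boundary M) (\<gamma> a t)})"

definition path_simplex :: "(real \<Rightarrow> 'a) \<Rightarrow> (nat \<Rightarrow> real) \<Rightarrow> 'a" where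
  "path_simplex \<gamma> = restrict (\<lambda>x. \<gamma> (x 1)) (standard_simplex 1)"

definition cut_chain :: "'i set \<Rightarrow> ('i \<Rightarrow> real \<Rightarrow> 'a) \<Rightarrow> 'a chain" where
  "cut_chain A \<gamma> = (\<Sum>a\<in>A. frag_of (path_simplex (\<gamma> a)))"

text \<open>[c] = 0 in H_1(M, bdry M; Z2), written with integer chains: c is, modulo
twice an integral chain, a relative boundary.\<close>

definition zero_in_rel_H1_Z2 :: "'a::euclidean_space set \<Rightarrow> 'a set \<Rightarrow> 'a chain \<Rightarrow> bool" where
  "zero_in_rel_H1_Z2 M B c \<longleftrightarrow>
     (\<exists>e. singular_chain 1 (top_of_set M) e \<and>
          singular_relboundary 1 (top_of_set M) B (c - frag_cmul 2 e))"

definition cuts_homologous ::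
  "'a::euclidean_space set \<Rightarrow> 'i set \<Rightarrow> ('i \<Rightarrow> real \<Rightarrow> 'a) \<Rightarrow> 'j set \<Rightarrow> ('j \<Rightarrow> real \<Rightarrow> 'a) \<Rightarrow> bool" where
  "cuts_homologous M A1 \<gamma>1 A2 \<gamma>2 \<longleftrightarrow>
     zero_in_rel_H1_Z2 M (surface_boundary M) (cut_chain A1 \<gamma>1 - cut_chain A2 \<gamma>2)"

text \<open>Gamma_odd: interior points at which an odd number of curve-ends lie
(a closed curve based at p contributes two ends).\<close>

definition cut_odd :: "'a::euclidean_space set \<Rightarrow> 'i set \<Rightarrow> ('i \<Rightarrow> real \<Rightarrow> 'a) \<Rightarrow> 'a set" where
  "cut_odd M A \<gamma> = {p \<in> M - surface_boundary M.
      odd (card {(a, e). a \<in> A \<and> e \<in> {0::real, 1} \<and> \<gamma> a e = p})}"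

end

theory Submission
  imports Defs
begin

definition ptsx :: "'a \<Rightarrow> (nat \<Rightarrow> real) \<Rightarrow> 'a" where
  "ptsx q = restrict (\<lambda>_. q) (standard_simplex 0)"
lemma v0_in: "(\<lambda>i. if i = 0 then 1 else 0::real) \<in> standard_simplex 0"
  by (simp add: standard_simplex_def)
lemma ptsx_v0: "ptsx q (\<lambda>i. if i = 0 then 1 else 0) = q"
  unfolding ptsx_def using v0_in by (simp only: restrict_apply') 
lemma ptsx_inj: "ptsx p = ptsx q \<Longrightarrow> p = q"
proof -
  assume h: "ptsx p = ptsx q"
  have "ptsx p (\<lambda>i. if i = 0 then 1 else 0) = ptsx q (\<lambda>i. if i = 0 then 1 else 0)"
    by (simp only: h)
  then show "p = q" by (simp only: ptsx_v0)
qed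

lemma ptsx_eq_iff [simp]: "ptsx p = ptsx q \<longleftrightarrow> p = q"
proof
  show "ptsx p = ptsx q \<Longrightarrow> p = q" by (rule ptsx_inj)
  show "p = q \<Longrightarrow> ptsx p = ptsx q" by (rule arg_cong)
qed

lemma face0: "singular_face 1 0 (path_simplex g) = ptsx (g 1)"
proof -
  have "\<And>x. x \<in> standard_simplex 0 \<Longrightarrow> simplical_face 0 x \<in> standard_simplex 1 \<and> simplical_face 0 x 1 = 1"
    using simplical_face_in_standard_simplex[of 1 0]
    by (auto simp: simplical_face_def standard_simplex_def)
  then show ?thesis
    by (auto simp: singular_face_def path_simplex_def ptsx_def fun_eq_iff)
qed

lemma face1: "singular_face 1 1 (path_simplex g) = ptsx (g 0)"
proof -
  have "\<And>x. x \<in> standard_simplex 0 \<Longrightarrow> simplical_face 1 x \<in> standard_simplex 1 \<and> simplical_face 1 x 1 = 0"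
    using simplical_face_in_standard_simplex[of 1 1]
    by (auto simp: simplical_face_def)
  then show ?thesis
    by (auto simp: singular_face_def path_simplex_def ptsx_def fun_eq_iff)
qed

lemma face0': "singular_face (Suc 0) 0 (path_simplex g) = ptsx (g 1)"
  using face0 by simp

lemma face1': "singular_face (Suc 0) (Suc 0) (path_simplex g) = ptsx (g 0)"
  using face1 by simp

lemma bd_path: "chain_boundary (Suc 0) (frag_of (path_simplex g)) = frag_of (ptsx (g 1)) - frag_of (ptsx (g 0))"
  by (simp add: chain_boundary_of face0' face1')

lemma lookup_bd_cut:
  "Poly_Mapping.lookup (chain_boundary 1 (cut_chain A \<gamma>)) (ptsx p)
     = (\<Sum>a\<in>A. of_bool (\<gamma> a 1 = p) - of_bool (\<gamma> a 0 = p))"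
  unfolding cut_chain_def chain_boundary_sum
  by (auto simp: lookup_sum bd_path lookup_minus intro!: sum.cong dest: ptsx_inj)

lemma card_ends:
  assumes "finite A"
  shows "int (card {(a, e). a \<in> A \<and> e \<in> {0::real, 1} \<and> \<gamma> a e = p})
     = (\<Sum>a\<in>A. of_bool (\<gamma> a 0 = p) + of_bool (\<gamma> a 1 = p))"
proof -
  have eq: "{(a, e). a \<in> A \<and> e \<in> {0::real, 1} \<and> \<gamma> a e = p} = Sigma A (\<lambda>a. {e \<in> {0,1}. \<gamma> a e = p})"
    by auto
  have c: "card {e \<in> {0::real,1}. \<gamma> a e = p} = of_bool (\<gamma> a 0 = p) + of_bool (\<gamma> a 1 = p)" for a
  proof -
    have "{e \<in> {0::real,1}. \<gamma> a e = p} = (if \<gamma> a 0 = p then {0} else {}) \<union> (if \<gamma> a 1 = p then {1} else {})"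
      by auto
    then show ?thesis by auto
  qed
  have "card (Sigma A (\<lambda>a. {e \<in> {0::real,1}. \<gamma> a e = p})) = (\<Sum>a\<in>A. card {e \<in> {0::real,1}. \<gamma> a e = p})"
    by (rule card_SigmaI) (use assms in auto)
  then show ?thesis unfolding eq by (simp only: of_nat_sum c of_nat_add of_nat_of_bool)
qed

lemma parity_eq:
  fixes x y :: int
  shows "even (x - y) \<longleftrightarrow> even (x + y)"
  by (metis add_diff_cancel diff_add_cancel even_add even_minus minus_diff_eq)

theorem proposition3p7:
  fixes M :: "'a::euclidean_space set"
    and A1 :: "'i set" and \<gamma>1 :: "'i \<Rightarrow> real \<Rightarrow> 'a"
    and A2 :: "'j set" and \<gamma>2 :: "'j \<Rightarrow> real \<Rightarrow> 'a"
  assumes "compact_oriented_pw_C1_surface M"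
    and "pw_C1_cut M A1 \<gamma>1"
    and "pw_C1_cut M A2 \<gamma>2"
    and "cuts_homologous M A1 \<gamma>1 A2 \<gamma>2"
  shows "cut_odd M A1 \<gamma>1 = cut_odd M A2 \<gamma>2"
proof -
  let ?B = "surface_boundary M"
  let ?X = "top_of_set M"
  have f1: "finite A1" and f2: "finite A2"
    using assms(2,3) by (auto simp: pw_C1_cut_def)
  let ?c = "cut_chain A1 \<gamma>1 - cut_chain A2 \<gamma>2"
  obtain e d where e: "singular_chain 1 ?X e" and d: "singular_chain 2 ?X d"
    and rel: "singular_chain 1 (subtopology ?X ?B) (chain_boundary 2 d - (?c - frag_cmul 2 e))"
    using assms(4) unfolding cuts_homologous_def zero_in_rel_H1_Z2_def singular_relboundary_def mod_subset_def
    by (auto simp: numeral_2_eq_2)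
  define z where "z = chain_boundary 1 (chain_boundary 2 d - (?c - frag_cmul 2 e))"
  have zc: "singular_chain 0 (subtopology ?X ?B) z"
    unfolding z_def using singular_chain_boundary[OF rel] by simp
  have bb: "chain_boundary 1 (chain_boundary 2 d) = 0"
  proof -
    have "chain_boundary 1 (chain_boundary (Suc 1) d) = 0"
      by (rule chain_boundary_boundary_alt[of 1 ?X]) (use d in \<open>simp add: numeral_2_eq_2\<close>)
    then show ?thesis by (simp add: numeral_2_eq_2)
  qed
  have zeq: "z = frag_cmul 2 (chain_boundary 1 e) - chain_boundary 1 (cut_chain A1 \<gamma>1) + chain_boundary 1 (cut_chain A2 \<gamma>2)"
    unfolding z_def chain_boundary_diff chain_boundary_cmul bb by (simp add: algebra_simps)
  have key: "even (card {(a, e). a \<in> A1 \<and> e \<in> {0::real, 1} \<and> \<gamma>1 a e = p})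
       \<longleftrightarrow> even (card {(a, e). a \<in> A2 \<and> e \<in> {0::real, 1} \<and> \<gamma>2 a e = p})"
    if p: "p \<notin> ?B" for p
  proof -
    have "ptsx p \<notin> Poly_Mapping.keys z"
    proof
      assume "ptsx p \<in> Poly_Mapping.keys z"
      then have "singular_simplex 0 (subtopology ?X ?B) (ptsx p)"
        using zc by (auto simp: singular_chain_def)
      then have "ptsx p ` standard_simplex 0 \<subseteq> ?B"
        by (simp add: singular_simplex_subtopology)
      then have "ptsx p (\<lambda>i. if i = 0 then 1 else 0) \<in> ?B" using v0_in by blast
      then show False using p by (simp only: ptsx_v0)
    qed
    then have "Poly_Mapping.lookup z (ptsx p) = 0" by (simp add: in_keys_iff)
    define L where "L = Poly_Mapping.lookup (chain_boundary 1 e) (ptsx p)"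
    define S1 where "S1 = (\<Sum>a\<in>A1. of_bool (\<gamma>1 a 1 = p) - of_bool (\<gamma>1 a 0 = p) :: int)"
    define S2 where "S2 = (\<Sum>a\<in>A2. of_bool (\<gamma>2 a 1 = p) - of_bool (\<gamma>2 a 0 = p) :: int)"
    define Y1 where "Y1 = (\<Sum>a\<in>A1. of_bool (\<gamma>1 a 0 = p) :: int)"
    define Y2 where "Y2 = (\<Sum>a\<in>A2. of_bool (\<gamma>2 a 0 = p) :: int)"
    have "Poly_Mapping.lookup z (ptsx p) = 2 * L - S1 + S2"
      unfolding zeq L_def S1_def S2_def lookup_add lookup_minus lookup_frag_cmul lookup_bd_cut by (rule refl)
    then have h: "S1 - S2 = 2 * L" using \<open>Poly_Mapping.lookup z (ptsx p) = 0\<close> by linarith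
    have T: "(\<Sum>a\<in>A. of_bool (g a 0 = p) + of_bool (g a 1 = p) :: int)
        = (\<Sum>a\<in>A. of_bool (g a 1 = p) - of_bool (g a 0 = p)) + 2 * (\<Sum>a\<in>A. of_bool (g a 0 = p))"
      for A :: "'k set" and g :: "'k \<Rightarrow> real \<Rightarrow> 'a"
    proof -
      have "(\<Sum>a\<in>A. of_bool (g a 0 = p) + of_bool (g a 1 = p) :: int)
          = (\<Sum>a\<in>A. (of_bool (g a 1 = p) - of_bool (g a 0 = p)) + 2 * of_bool (g a 0 = p))"
        by (rule sum.cong) auto
      also have "\<dots> = (\<Sum>a\<in>A. of_bool (g a 1 = p) - of_bool (g a 0 = p)) + 2 * (\<Sum>a\<in>A. of_bool (g a 0 = p))"
        by (simp only: sum.distrib sum_distrib_left)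
      finally show ?thesis .
    qed
    have c1: "int (card {(a, e). a \<in> A1 \<and> e \<in> {0::real, 1} \<and> \<gamma>1 a e = p}) = S1 + 2 * Y1"
      unfolding card_ends[OF f1] T S1_def Y1_def ..
    have c2: "int (card {(a, e). a \<in> A2 \<and> e \<in> {0::real, 1} \<and> \<gamma>2 a e = p}) = S2 + 2 * Y2"
      unfolding card_ends[OF f2] T S2_def Y2_def ..
    have "S1 + 2 * Y1 = (S2 + 2 * Y2) + 2 * (L + Y1 - Y2)" using h by (simp add: algebra_simps)
    then have "even (S1 + 2 * Y1) \<longleftrightarrow> even (S2 + 2 * Y2)" by simp
    then show ?thesis
      by (simp only: c1[symmetric] c2[symmetric] even_of_nat)
  qed
  show ?thesis unfolding cut_odd_def using key by auto
qed

end
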